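(* Let $G=(V,E)$ be a graph with no $K_4$ minor and let $C\subseteq V$ be central. Then every simple cycle of $G$ contains at most two edges of $\delta_G(C)$.
   Context: $\delta_G(C)$ is the set of edges of $G$ with exactly one endpoint in $C$. A set $C\subseteq V$ (and the cut $\delta_G(C)$) is central if both $C$ and $V\setminus C$ induce connected subgraphs of $G$. *)

theory Defs
  imports Main
begin

definition simple_graph :: "'a set \<Rightarrow> ('a \<Rightarrow> 'a \<Rightarrow> bool) \<Rightarrow> bool" where
  "simple_graph V E \<longleftrightarrow> finite V \<and> (\<forall>u v. E u v \<longrightarrow> E v u)
     \<and> (\<forall>v. \<not> E v v) \<and> (\<forall>u v. E u v \<longrightarrow> u \<in> V \<and> v \<in> V)"

definition induces_connected :: "('a \<Rightarrow> 'a \<Rightarrow> bool) \<Rightarrow> 'a set \<Rightarrow> bool" where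
  "induces_connected E S \<longleftrightarrow> (\<forall>x\<in>S. \<forall>y\<in>S. \<exists>p. p \<noteq> [] \<and> hd p = x \<and> last p = y
      \<and> set p \<subseteq> S \<and> (\<forall>i. Suc i < length p \<longrightarrow> E (p ! i) (p ! Suc i)))"

definition central :: "'a set \<Rightarrow> ('a \<Rightarrow> 'a \<Rightarrow> bool) \<Rightarrow> 'a set \<Rightarrow> bool" where
  "central V E C \<longleftrightarrow> C \<subseteq> V \<and> induces_connected E C \<and> induces_connected E (V - C)"

definition cut_edges :: "'a set \<Rightarrow> ('a \<Rightarrow> 'a \<Rightarrow> bool) \<Rightarrow> 'a set \<Rightarrow> 'a set set" where
  "cut_edges V E C = {{u, v} | u v. E u v \<and> u \<in> C \<and> v \<in> V - C}"

definition has_K4_minor :: "'a set \<Rightarrow> ('a \<Rightarrow> 'a \<Rightarrow> bool) \<Rightarrow> bool" where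
  "has_K4_minor V E \<longleftrightarrow> (\<exists>B :: nat \<Rightarrow> 'a set.
      (\<forall>i<4. B i \<noteq> {} \<and> B i \<subseteq> V \<and> induces_connected E (B i)) \<and>
      (\<forall>i<4. \<forall>j<4. i \<noteq> j \<longrightarrow> B i \<inter> B j = {} \<and> (\<exists>u\<in>B i. \<exists>v\<in>B j. E u v)))"

definition simple_cycle :: "('a \<Rightarrow> 'a \<Rightarrow> bool) \<Rightarrow> 'a list \<Rightarrow> bool" where
  "simple_cycle E cs \<longleftrightarrow> length cs \<ge> 3 \<and> distinct cs \<and>
     (\<forall>i < length cs. E (cs ! i) (cs ! ((i + 1) mod length cs)))"

definition cycle_edges :: "'a list \<Rightarrow> 'a set set" where
  "cycle_edges cs = {{cs ! i, cs ! ((i + 1) mod length cs)} | i. i < length cs}"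

end

theory Submission imports Defs begin

fun wk :: "('a \<Rightarrow> 'a \<Rightarrow> bool) \<Rightarrow> 'a list \<Rightarrow> bool" where
  "wk E [] = True" | "wk E [x] = True" | "wk E (x#y#zs) = (E x y \<and> wk E (y#zs))"

lemma wk_iff: "wk E p \<longleftrightarrow> (\<forall>i. Suc i < length p \<longrightarrow> E (p!i) (p!Suc i))"
proof (induction E p rule: wk.induct)
  case (3 E x y zs)
  show ?case
  proof
    assume h: "wk E (x#y#zs)"
    show "\<forall>i. Suc i < length (x#y#zs) \<longrightarrow> E ((x#y#zs)!i) ((x#y#zs)!Suc i)"
    proof (intro allI impI)
      fix i assume "Suc i < length (x#y#zs)"
      then show "E ((x#y#zs)!i) ((x#y#zs)!Suc i)" using h 3 by (cases i) auto
    qed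
  next
    assume h: "\<forall>i. Suc i < length (x#y#zs) \<longrightarrow> E ((x#y#zs)!i) ((x#y#zs)!Suc i)"
    have "E x y" using h[rule_format, of 0] by simp
    moreover have "\<forall>i. Suc i < length (y#zs) \<longrightarrow> E ((y#zs)!i) ((y#zs)!Suc i)"
    proof (intro allI impI)
      fix i assume "Suc i < length (y#zs)"
      then show "E ((y#zs)!i) ((y#zs)!Suc i)" using h[rule_format, of "Suc i"] by simp
    qed
    ultimately show "wk E (x#y#zs)" using 3 by simp
  qed
qed auto

lemma wk_append: "wk E (xs @ ys) \<longleftrightarrow> wk E xs \<and> wk E ys \<and> (xs \<noteq> [] \<longrightarrow> ys \<noteq> [] \<longrightarrow> E (last xs) (hd ys))"
proof (induction xs)
  case (Cons x xs)
  then show ?case by (cases xs; cases ys) auto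
qed simp

lemma wk_rev: "\<forall>u v. E u v \<longrightarrow> E v u \<Longrightarrow> wk E p \<Longrightarrow> wk E (rev p)"
  by (induction E p rule: wk.induct) (auto simp: wk_append)

definition reach :: "('a \<Rightarrow> 'a \<Rightarrow> bool) \<Rightarrow> 'a set \<Rightarrow> 'a \<Rightarrow> 'a set" where
  "reach E D a = {z. \<exists>p. p \<noteq> [] \<and> hd p = a \<and> last p = z \<and> set p \<subseteq> D \<and> wk E p}"

lemma reach_self: "a \<in> D \<Longrightarrow> a \<in> reach E D a"
  unfolding reach_def by (rule CollectI, rule exI[of _ "[a]"]) auto

lemma reach_sub: "reach E D a \<subseteq> D"
  unfolding reach_def by auto

lemma reach_step: "z \<in> reach E D a \<Longrightarrow> w \<in> D \<Longrightarrow> E z w \<Longrightarrow> w \<in> reach E D a"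
proof -
  assume "z \<in> reach E D a" "w \<in> D" "E z w"
  then obtain p where p: "p \<noteq> []" "hd p = a" "last p = z" "set p \<subseteq> D" "wk E p"
    unfolding reach_def by auto
  show "w \<in> reach E D a" unfolding reach_def
    by (rule CollectI, rule exI[of _ "p @ [w]"]) (use p \<open>w \<in> D\<close> \<open>E z w\<close> in \<open>auto simp: wk_append\<close>)
qed

lemma walk_in_reach: "wk E p \<Longrightarrow> p \<noteq> [] \<Longrightarrow> set p \<subseteq> D \<Longrightarrow> set p \<subseteq> reach E D (hd p)"
proof (induction p rule: rev_induct)
  case (snoc x q)
  show ?case
  proof (cases "q = []")
    case True
    then show ?thesis using snoc reach_self by auto
  next
    case False
    have wq: "wk E q" and e: "E (last q) x" using snoc.prems False by (auto simp: wk_append)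
    have IH: "set q \<subseteq> reach E D (hd q)" using snoc False wq by auto
    have "last q \<in> reach E D (hd q)" using IH False by auto
    then have "x \<in> reach E D (hd q)" using reach_step e snoc.prems by auto
    then show ?thesis using IH False by auto
  qed
qed simp

lemma conn_from:
  assumes sym: "\<forall>u v. E u v \<longrightarrow> E v u"
    and a: "\<forall>z\<in>S. \<exists>p. p \<noteq> [] \<and> hd p = a \<and> last p = z \<and> set p \<subseteq> S \<and> wk E p"
  shows "induces_connected E S"
  unfolding induces_connected_def
proof (intro ballI)
  fix x y assume x: "x \<in> S" and y: "y \<in> S"
  obtain p where p: "p \<noteq> []" "hd p = a" "last p = x" "set p \<subseteq> S" "wk E p" using a x by blast
  obtain q where q: "q \<noteq> []" "hd q = a" "last q = y" "set q \<subseteq> S" "wk E q" using a y by blast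
  obtain q' where q': "q = a # q'" using q by (cases q) auto
  define r where "r = rev p @ q'"
  have wr: "wk E (rev p)" using wk_rev[OF sym p(5)] .
  have wq': "wk E q'" and eq: "q' \<noteq> [] \<Longrightarrow> E a (hd q')" using q(5) q' wk_append[of E "[a]" q'] by auto
  have "wk E r" unfolding r_def using wr wq' eq p by (auto simp: wk_append last_rev)
  moreover have "r \<noteq> []" "hd r = x" using p by (auto simp: r_def hd_rev)
  moreover have "last r = y" using p q q' by (cases "q' = []") (auto simp: r_def last_rev)
  moreover have "set r \<subseteq> S" using p q q' by (auto simp: r_def)
  ultimately show "\<exists>p. p \<noteq> [] \<and> hd p = x \<and> last p = y \<and> set p \<subseteq> S \<and> (\<forall>i. Suc i < length p \<longrightarrow> E (p ! i) (p ! Suc i))"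
    by (auto simp: wk_iff)
qed

lemma reach_conn: "\<forall>u v. E u v \<longrightarrow> E v u \<Longrightarrow> induces_connected E (reach E D a)"
proof (rule conn_from[where a=a])
  show "\<forall>z\<in>reach E D a. \<exists>p. p \<noteq> [] \<and> hd p = a \<and> last p = z \<and> set p \<subseteq> reach E D a \<and> wk E p"
  proof
    fix z assume "z \<in> reach E D a"
    then obtain p where p: "p \<noteq> []" "hd p = a" "last p = z" "set p \<subseteq> D" "wk E p"
      unfolding reach_def by auto
    have "set p \<subseteq> reach E D a" using walk_in_reach[OF p(5,1,4)] p(2) by simp
    then show "\<exists>p. p \<noteq> [] \<and> hd p = a \<and> last p = z \<and> set p \<subseteq> reach E D a \<and> wk E p" using p by blast
  qed
qed

lemma list_conn: "\<forall>u v. E u v \<longrightarrow> E v u \<Longrightarrow> wk E p \<Longrightarrow> induces_connected E (set p)"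
proof (cases "p = []")
  case True then show ?thesis by (simp add: induces_connected_def)
next
  case False
  assume s: "\<forall>u v. E u v \<longrightarrow> E v u" and w: "wk E p"
  have "set p \<subseteq> reach E (set p) (hd p)" by (rule walk_in_reach[OF w False order_refl])
  then have "set p = reach E (set p) (hd p)" using reach_sub[of E "set p" "hd p"] by (rule equalityI)
  then show ?thesis using reach_conn[OF s, of "set p" "hd p"] by simp
qed

lemma edge_out: "wk E p \<Longrightarrow> p \<noteq> [] \<Longrightarrow> hd p \<in> R \<Longrightarrow> last p \<notin> R \<Longrightarrow> \<exists>u\<in>set p. \<exists>v\<in>set p. u \<in> R \<and> v \<notin> R \<and> E u v"
proof (induction E p rule: wk.induct)
  case (3 E x y zs)
  then show ?case by (cases "y \<in> R") auto
qed auto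

lemma conn_edge_out:
  assumes "induces_connected E W" "x \<in> W" "y \<in> W" "x \<in> R" "y \<notin> R"
  shows "\<exists>u\<in>W. \<exists>v\<in>W. u \<in> R \<and> v \<notin> R \<and> E u v"
proof -
  obtain p where p: "p \<noteq> []" "hd p = x" "last p = y" "set p \<subseteq> W" "wk E p"
    using assms(1-3) unfolding induces_connected_def wk_iff by blast
  show ?thesis using edge_out[OF p(5,1)] p assms(4,5) by blast
qed

lemma all4: "(\<forall>i<(4::nat). P i) \<longleftrightarrow> P 0 \<and> P 1 \<and> P 2 \<and> P 3"
  by (auto simp: less_Suc_eq numeral_eq_Suc)

lemma K4I:
  fixes B :: "nat \<Rightarrow> 'a set"
  assumes sym: "\<forall>u v. E u v \<longrightarrow> E v u"
    and b: "\<forall>i<4. B i \<noteq> {} \<and> B i \<subseteq> V \<and> induces_connected E (B i)"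
    and p: "\<forall>i<4. \<forall>j<4. i < j \<longrightarrow> B i \<inter> B j = {} \<and> (\<exists>u\<in>B i. \<exists>v\<in>B j. E u v)"
  shows "has_K4_minor V E"
proof -
  have q: "\<forall>i<4. \<forall>j<4. i \<noteq> j \<longrightarrow> B i \<inter> B j = {} \<and> (\<exists>u\<in>B i. \<exists>v\<in>B j. E u v)"
  proof (intro allI impI)
    fix i j :: nat assume ij: "i < 4" "j < 4" "i \<noteq> j"
    show "B i \<inter> B j = {} \<and> (\<exists>u\<in>B i. \<exists>v\<in>B j. E u v)"
    proof (cases "i < j")
      case True then show ?thesis using p ij by blast
    next
      case False then have ji: "j < i" using ij by simp
      have "B j \<inter> B i = {} \<and> (\<exists>u\<in>B j. \<exists>v\<in>B i. E u v)" using p ij ji by blast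
      then show ?thesis using sym by blast
    qed
  qed
  show ?thesis unfolding has_K4_minor_def using b q by blast
qed


lemma main:
  assumes sym: "\<forall>u v. E u v \<longrightarrow> E v u"
    and cen: "central V E C"
    and SV: "set (A @ R) \<subseteq> V"
    and dist: "distinct (A @ R)" and wkL: "wk E (A @ R)" and bk: "E (last R) (hd A)"
    and An: "A \<noteq> []" and AC: "set A \<subseteq> C" and Rn: "R \<noteq> []" and hR: "hd R \<notin> C" and lR: "last R \<notin> C"
    and x0: "x0 \<in> set R" "x0 \<in> C"
  shows "has_K4_minor V E"
proof -
  define S where "S = set (A @ R)"
  define N where "N = V - C"
  have CV: "C \<subseteq> V" and Cc: "induces_connected E C" and Nc: "induces_connected E N"
    using cen by (auto simp: central_def N_def)
  define D1 where "D1 = set A \<union> (C - S)"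
  define X where "X = reach E D1 (hd A)"
  have wA: "wk E A" and wR: "wk E R" and eAR: "E (last A) (hd R)" using wkL An Rn by (auto simp: wk_append)
  have AX: "set A \<subseteq> X" unfolding X_def using walk_in_reach[OF wA An, of D1] D1_def by auto
  have XD1: "X \<subseteq> D1" unfolding X_def by (rule reach_sub)
  have hAX: "hd A \<in> X" using AX An by auto
  have dAR: "set A \<inter> set R = {}" using dist by auto
  have "x0 \<notin> D1" using x0 dAR by (auto simp: D1_def S_def)
  then have x0X: "x0 \<notin> X" using XD1 by auto
  have "hd A \<in> C" using AC An by auto
  then obtain u y where uX: "u \<in> X" and yC: "y \<in> C" and yX: "y \<notin> X" and uy: "E u y"
    using conn_edge_out[OF Cc, of "hd A" x0 X] hAX x0X x0 by blast
  have "y \<notin> D1" using reach_step[of u E D1 "hd A" y] uX uy yX unfolding X_def by blast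
  hence yR: "y \<in> set R" using yC by (auto simp: D1_def S_def)
  obtain R1 R2 where Rsplit: "R = R1 @ y # R2" using split_list[OF yR] by auto
  have R1n: "R1 \<noteq> []" using hR yC Rsplit by auto
  have R2n: "R2 \<noteq> []" using lR yC Rsplit by auto
  have wR': "wk E (R1 @ [y] @ R2)" using wR Rsplit by simp
  have wR1: "wk E R1" and wR2: "wk E R2" and eR1y: "E (last R1) y" and eyR2: "E y (hd R2)"
    using wR' R1n R2n wk_append[of E R1 "[y] @ R2"] wk_append[of E "[y]" R2] by auto
  have hdR: "hd R = hd R1" and lastR: "last R = last R2" using Rsplit R1n R2n by auto
  have dist2: "distinct (A @ R1 @ y # R2)" using dist Rsplit by simp
  have Sdef: "S = set A \<union> set R1 \<union> {y} \<union> set R2" using Rsplit S_def by auto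
  define D2 where "D2 = set R1 \<union> (N - S)"
  define Z where "Z = reach E D2 (hd R1)"
  have R1Z: "set R1 \<subseteq> Z" unfolding Z_def using walk_in_reach[OF wR1 R1n, of D2] D2_def by auto
  have ZD2: "Z \<subseteq> D2" unfolding Z_def by (rule reach_sub)
  have hR1N: "hd R1 \<in> N" using hR hdR[symmetric] SV hd_in_set[OF Rn] N_def by auto
  have lR2N: "last R2 \<in> N" using lR lastR[symmetric] SV last_in_set[OF Rn] N_def by auto
  have "last R2 \<notin> D2" using dist2 R2n by (auto simp: D2_def Sdef)
  then have lR2Z: "last R2 \<notin> Z" using ZD2 by auto
  have hR1Z: "hd R1 \<in> Z" using R1Z R1n by auto
  obtain u' v where u'Z: "u' \<in> Z" and vN: "v \<in> N" and vZ: "v \<notin> Z" and u'v: "E u' v"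
    using conn_edge_out[OF Nc, of "hd R1" "last R2" Z] hR1N lR2N hR1Z lR2Z by blast
  have "v \<notin> D2" using reach_step[of u' E D2 "hd R1" v] u'Z u'v vZ unfolding Z_def by blast
  then have vR2: "v \<in> set R2" using vN AC yC by (auto simp: D2_def Sdef N_def)
  define B where "B = (\<lambda>i::nat. if i = 0 then X else if i = 1 then {y} else if i = 2 then Z else set R2)"
  have SV': "S \<subseteq> V" using SV S_def by simp
  have "X \<subseteq> V" using XD1 SV' CV by (auto simp: D1_def S_def)
  moreover have "Z \<subseteq> V" using ZD2 SV' by (auto simp: D2_def Sdef N_def)
  moreover have "y \<in> V" "set R2 \<subseteq> V" using SV' Sdef by auto
  moreover have "induces_connected E X" unfolding X_def by (rule reach_conn[OF sym])
  moreover have "induces_connected E Z" unfolding Z_def by (rule reach_conn[OF sym])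
  moreover have "induces_connected E {y}" using list_conn[OF sym, of "[y]"] by simp
  moreover have "induces_connected E (set R2)" using list_conn[OF sym wR2] .
  ultimately have b: "\<forall>i<4. B i \<noteq> {} \<and> B i \<subseteq> V \<and> induces_connected E (B i)"
    using hAX hR1Z R2n by (auto simp: all4 B_def)
  have d1: "X \<inter> {y} = {}" using yX by auto
  have d2: "X \<inter> Z = {}" using XD1 ZD2 dist2 by (auto simp: D1_def D2_def Sdef N_def)
  have d3: "X \<inter> set R2 = {}" using XD1 dist2 by (auto simp: D1_def Sdef)
  have d4: "{y} \<inter> Z = {}" using ZD2 dist2 by (auto simp: D2_def Sdef)
  have d5: "{y} \<inter> set R2 = {}" using dist2 by auto
  have d6: "Z \<inter> set R2 = {}" using ZD2 dist2 by (auto simp: D2_def Sdef)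
  have a1: "\<exists>a\<in>X. \<exists>b\<in>{y}. E a b" using uX uy by auto
  have "last A \<in> X" using AX An by auto
  then have a2: "\<exists>a\<in>X. \<exists>b\<in>Z. E a b" using eAR hdR hR1Z by auto
  have "hd R2 \<in> set R2" "last R2 \<in> set R2" using R2n by auto
  moreover have "E (hd A) (last R2)" using sym[rule_format, OF bk] lastR by simp
  ultimately have a3: "\<exists>a\<in>X. \<exists>b\<in>set R2. E a b" using hAX by blast
  have "last R1 \<in> Z" using R1Z R1n by auto
  moreover have "E y (last R1)" using sym[rule_format, OF eR1y] .
  ultimately have a4: "\<exists>a\<in>{y}. \<exists>b\<in>Z. E a b" by blast
  have a5: "\<exists>a\<in>{y}. \<exists>b\<in>set R2. E a b" using eyR2 \<open>hd R2 \<in> set R2\<close> by blast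
  have a6: "\<exists>a\<in>Z. \<exists>b\<in>set R2. E a b" using u'Z u'v vR2 by blast
  have p: "\<forall>i<4. \<forall>j<4. i < j \<longrightarrow> B i \<inter> B j = {} \<and> (\<exists>u\<in>B i. \<exists>v\<in>B j. E u v)"
    unfolding all4 using d1 d2 d3 d4 d5 d6 a1 a2 a3 a4 a5 a6 by (simp add: B_def)
  show ?thesis by (rule K4I[OF sym b p])
qed


lemma mod_shift: "(k + Suc i mod n) mod n = Suc ((k + i) mod n) mod (n::nat)"
proof -
  have "(k + Suc i mod n) mod n = (k + Suc i) mod n" by (simp add: mod_add_right_eq)
  also have "\<dots> = Suc (k + i) mod n" by simp
  also have "\<dots> = Suc ((k + i) mod n) mod n" by (simp add: mod_Suc_eq)
  finally show ?thesis .
qed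

lemma rot_cycle: assumes "simple_cycle E cs" shows "simple_cycle E (rotate k cs)"
  unfolding simple_cycle_def
proof (intro conjI allI impI)
  show "3 \<le> length (rotate k cs)" "distinct (rotate k cs)" using assms by (auto simp: simple_cycle_def)
  fix i assume i: "i < length (rotate k cs)"
  define n where "n = length cs"
  have n: "n > 0" "i < n" using i n_def by auto
  have j: "(k + i) mod n < n" using n by simp
  have "E (cs ! ((k + i) mod n)) (cs ! (((k + i) mod n + 1) mod n))"
    using assms j unfolding simple_cycle_def n_def by blast
  then show "E (rotate k cs ! i) (rotate k cs ! ((i + 1) mod length (rotate k cs)))"
    using n by (simp add: nth_rotate n_def[symmetric] mod_shift)
qed

lemma rot_edges_sub: "cycle_edges (rotate k cs) \<subseteq> cycle_edges cs"
proof
  fix e assume "e \<in> cycle_edges (rotate k cs)"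
  then obtain i where i: "i < length cs" and e: "e = {rotate k cs ! i, rotate k cs ! ((i + 1) mod length cs)}"
    unfolding cycle_edges_def by auto
  define n where "n = length cs"
  have n: "n > 0" "i < n" using i n_def by auto
  have e': "e = {cs ! ((k + i) mod n), cs ! (((k + i) mod n + 1) mod n)}"
    using e n by (simp add: nth_rotate n_def[symmetric] mod_shift)
  have "(k + i) mod n < n" using n by simp
  then show "e \<in> cycle_edges cs" unfolding cycle_edges_def using e' n_def by blast
qed

lemma rot_edges: "cycle_edges (rotate k cs) = cycle_edges cs"
proof (cases "cs = []")
  case True then show ?thesis by simp
next
  case False
  define n where "n = length cs"
  have n: "n > 0" using False n_def by auto
  have "(n - k mod n + k) mod n = (n - k mod n + k mod n) mod n" by (simp add: mod_add_right_eq)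
  also have "\<dots> = 0" using n by simp
  finally have "rotate (n - k mod n) (rotate k cs) = cs" by (simp add: rotate_rotate n_def)
  then have "cycle_edges cs \<subseteq> cycle_edges (rotate k cs)" using rot_edges_sub by metis
  then show ?thesis using rot_edges_sub by blast
qed

lemma cycle_wk: assumes "simple_cycle E L" shows "wk E L" "E (last L) (hd L)"
proof -
  have n: "length L \<ge> 3" and a: "\<forall>i < length L. E (L ! i) (L ! ((i + 1) mod length L))"
    using assms by (auto simp: simple_cycle_def)
  show "wk E L" unfolding wk_iff
  proof (intro allI impI)
    fix i assume "Suc i < length L"
    then show "E (L!i) (L!Suc i)" using a[rule_format, of i] by simp
  qed
  have "L \<noteq> []" using n by auto
  have "E (L ! (length L - 1)) (L ! ((length L - 1 + 1) mod length L))" using a n by simp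
  moreover have "(length L - 1 + 1) mod length L = 0" using n by (simp add: Suc_diff_Suc del: One_nat_def)
  ultimately have "E (L ! (length L - 1)) (L ! 0)" by simp
  then show "E (last L) (hd L)" using \<open>L \<noteq> []\<close> by (simp add: last_conv_nth hd_conv_nth)
qed

lemma cut_diff: "e \<in> cut_edges V E C \<Longrightarrow> e = {a, b} \<Longrightarrow> (a \<in> C) \<noteq> (b \<in> C)"
  unfolding cut_edges_def by (auto simp: doubleton_eq_iff)

lemma bound:
  assumes L: "L = A @ R" and AC: "set A \<subseteq> C" and RC: "\<forall>x\<in>set R. x \<notin> C" and An: "A \<noteq> []" and Rn: "R \<noteq> []"
  shows "cycle_edges L \<inter> cut_edges V E C \<subseteq> {{last A, hd R}, {last R, hd A}}"
proof
  fix e assume e: "e \<in> cycle_edges L \<inter> cut_edges V E C"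
  define n where "n = length L"
  obtain i where i: "i < n" and ei: "e = {L ! i, L ! ((i + 1) mod n)}"
    using e unfolding cycle_edges_def n_def by auto
  have mem: "\<And>k. k < n \<Longrightarrow> (L ! k \<in> C) = (k < length A)"
  proof -
    fix k assume k: "k < n"
    show "(L ! k \<in> C) = (k < length A)"
    proof (cases "k < length A")
      case True then show ?thesis using AC L by (auto simp: nth_append)
    next
      case False
      then have "k - length A < length R" using k L n_def by auto
      then have "R ! (k - length A) \<in> set R" by simp
      then show ?thesis using False RC L by (auto simp: nth_append)
    qed
  qed
  have diff: "(L ! i \<in> C) \<noteq> (L ! ((i + 1) mod n) \<in> C)" using cut_diff[OF _ ei, of V E C] e by simp
  show "e \<in> {{last A, hd R}, {last R, hd A}}"
  proof (cases "i + 1 < n")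
    case True
    then have "(i < length A) \<noteq> (i + 1 < length A)" using diff mem i by simp
    then have iA: "i = length A - 1" by auto
    have "L ! i = last A" using iA An L by (simp add: nth_append last_conv_nth)
    moreover have "L ! ((i + 1) mod n) = hd R" using iA An Rn L True by (simp add: nth_append hd_conv_nth)
    ultimately show ?thesis using ei by simp
  next
    case False
    then have iA: "i = n - 1" using i by auto
    then have "i + 1 = n" using i by simp
    then have iA2: "(i + 1) mod n = 0" by simp
    have "L \<noteq> []" using L Rn by simp
    then have "L ! i = last L" using iA n_def by (simp add: last_conv_nth)
    then have "L ! i = last R" using L Rn by simp
    moreover have "L ! 0 = hd A" using An L by (simp add: nth_append hd_conv_nth)
    ultimately show ?thesis using ei iA2 by auto
  qed
qed


theorem lemma2p2:
  fixes V :: "'a set" and E :: "'a \<Rightarrow> 'a \<Rightarrow> bool" and C :: "'a set" and cs :: "'a list"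
  assumes "simple_graph V E"
    and "\<not> has_K4_minor V E"
    and "central V E C"
    and "simple_cycle E cs"
  shows "card (cycle_edges cs \<inter> cut_edges V E C) \<le> 2"
proof -
  have sym: "\<forall>u v. E u v \<longrightarrow> E v u" and EV: "\<And>u v. E u v \<Longrightarrow> u \<in> V \<and> v \<in> V"
    using assms(1) by (auto simp: simple_graph_def)
  have csV: "set cs \<subseteq> V"
  proof
    fix x assume "x \<in> set cs"
    then obtain i where i: "i < length cs" "x = cs ! i" by (auto simp: in_set_conv_nth)
    then show "x \<in> V" using assms(4) EV unfolding simple_cycle_def by blast
  qed
  show ?thesis
  proof (cases "(\<forall>x\<in>set cs. x \<in> C) \<or> (\<forall>x\<in>set cs. x \<notin> C)")
    case True
    have "cycle_edges cs \<inter> cut_edges V E C = {}"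
    proof (rule ccontr)
      assume "cycle_edges cs \<inter> cut_edges V E C \<noteq> {}"
      then obtain e where e: "e \<in> cycle_edges cs" "e \<in> cut_edges V E C" by blast
      then obtain i where i: "i < length cs" and ei: "e = {cs ! i, cs ! ((i + 1) mod length cs)}"
        unfolding cycle_edges_def by auto
      have "(i + 1) mod length cs < length cs" using i by (intro mod_less_divisor) auto
      then have "cs ! i \<in> set cs" "cs ! ((i + 1) mod length cs) \<in> set cs" using i by (auto simp del: One_nat_def)
      then show False using cut_diff[OF e(2) ei] True by blast
    qed
    then show ?thesis by simp
  next
    case False
    then obtain c d where c: "c \<in> set cs" "c \<in> C" and d: "d \<in> set cs" "d \<notin> C" by blast
    obtain j where j: "j < length cs" "cs ! j = d" using d by (auto simp: in_set_conv_nth)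
    define L0 where "L0 = rotate j cs"
    have csn: "cs \<noteq> []" using j by auto
    have hL0: "hd L0 \<notin> C" using j d csn by (simp add: L0_def hd_rotate_conv_nth)
    define N0 where "N0 = takeWhile (\<lambda>x. x \<notin> C) L0"
    define R0 where "R0 = dropWhile (\<lambda>x. x \<notin> C) L0"
    have L0eq: "L0 = N0 @ R0" by (simp add: N0_def R0_def)
    have L0n: "L0 \<noteq> []" using csn by (simp add: L0_def)
    have N0n: "N0 \<noteq> []" using hL0 L0n by (cases L0) (auto simp: N0_def)
    have R0n: "R0 \<noteq> []" using c by (auto simp: R0_def L0_def)
    have hR0: "hd R0 \<in> C" using hd_dropWhile[of "\<lambda>x. x \<notin> C" L0] R0n by (simp add: R0_def)
    have lN0: "last N0 \<notin> C" using last_in_set[OF N0n] set_takeWhileD unfolding N0_def by fastforce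
    define L where "L = R0 @ N0"
    have Lrot: "L = rotate (length N0 + j) cs"
      using rotate_append[of N0 R0] L0eq rotate_rotate[of "length N0" j cs] by (simp add: L_def L0_def)
    have cycL: "simple_cycle E L" using rot_cycle[OF assms(4)] Lrot by simp
    have edL: "cycle_edges L = cycle_edges cs" using rot_edges Lrot by simp
    have setL: "set L = set cs" using Lrot by simp
    have hL: "hd L \<in> C" using hR0 R0n by (simp add: L_def)
    have lL: "last L \<notin> C" using lN0 N0n by (simp add: L_def)
    define A where "A = takeWhile (\<lambda>x. x \<in> C) L"
    define R where "R = dropWhile (\<lambda>x. x \<in> C) L"
    have LAR: "L = A @ R" by (simp add: A_def R_def)
    have Ln: "L \<noteq> []" using R0n by (simp add: L_def)
    have An: "A \<noteq> []" using hL Ln by (cases L) (auto simp: A_def)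
    have Rn: "R \<noteq> []" using lL Ln last_in_set[OF Ln] by (auto simp: R_def)
    have AC: "set A \<subseteq> C" unfolding A_def by (auto dest: set_takeWhileD)
    have hR: "hd R \<notin> C" using hd_dropWhile[of "\<lambda>x. x \<in> C" L] Rn by (simp add: R_def)
    have lR: "last R \<notin> C" using lL LAR Rn by simp
    have wL: "wk E L" and bL: "E (last L) (hd L)" using cycle_wk[OF cycL] by auto
    have RC: "\<forall>x\<in>set R. x \<notin> C"
    proof (rule ccontr)
      assume "\<not> (\<forall>x\<in>set R. x \<notin> C)"
      then obtain x0 where x0: "x0 \<in> set R" "x0 \<in> C" by blast
      have "has_K4_minor V E"
      proof (rule main[OF sym assms(3) _ _ _ _ An AC Rn hR lR x0])
        show "set (A @ R) \<subseteq> V" using csV setL LAR by simp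
        show "distinct (A @ R)" using cycL LAR by (simp add: simple_cycle_def)
        show "wk E (A @ R)" using wL LAR by simp
        show "E (last R) (hd A)" using bL LAR An Rn by simp
      qed
      then show False using assms(2) by simp
    qed
    have "cycle_edges cs \<inter> cut_edges V E C \<subseteq> {{last A, hd R}, {last R, hd A}}"
      using bound[OF LAR AC RC An Rn, of V E] edL by simp
    moreover have "card {{last A, hd R}, {last R, hd A}} \<le> 2" by (simp add: card_insert_le_m1)
    ultimately show ?thesis
      by (meson card_mono finite.emptyI finite.insertI le_trans)
  qed
qed

end
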